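(* Let $n\ge 3$, let $a_0,\ldots,a_{n-1}$ be indeterminates over $\mathbb{Q}$, and let $f=x^n+a_{n-1}x^{n-1}+\cdots+a_0$ with roots $r_1,\ldots,r_n$ in an algebraic closure of $\mathbb{Q}(a_0,\ldots,a_{n-1})$. Let $D_2\in\mathbb{Q}[a_0,\ldots,a_{n-1}]$ be the polynomial obtained by expressing the symmetric polynomial $\prod_{1\le i,j,k\le n,\ i<j,\ j\ne k,\ k\ne i}(2r_k-r_i-r_j)$ in terms of the coefficients via Vieta's formulas $a_{n-i}=(-1)^i s_i$ ($s_i$ the $i$th elementary symmetric polynomial of $r_1,\ldots,r_n$). Then $D_2$ is irreducible over $\mathbb{Q}$. *)

theory Defs
  imports Complex_Main "HOL-Library.Poly_Mapping" "HOL-Computational_Algebra.Factorial_Ring"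
begin

(* Multivariate polynomials over a ring 'a in countably many variables indexed by nat:
  a polynomial is a finitely supported map from monomials (exponent vectors nat =>0 nat)
  to coefficients; the ring structure is the convolution product from HOL-Library.Poly_Mapping. *)

type_synonym 'a mpoly = "(nat \<Rightarrow>\<^sub>0 nat) \<Rightarrow>\<^sub>0 'a"

definition mconst :: "'a::zero \<Rightarrow> 'a mpoly" where
  "mconst c = Poly_Mapping.single 0 c"

definition mvar :: "nat \<Rightarrow> 'a::{zero,one} mpoly" where
  "mvar i = Poly_Mapping.single (Poly_Mapping.single i 1) 1"

definition mvars :: "'a::zero mpoly \<Rightarrow> nat set" where
  "mvars p = (\<Union>m\<in>Poly_Mapping.keys p. Poly_Mapping.keys m)"

definition msubst :: "'a::comm_ring_1 mpoly \<Rightarrow> (nat \<Rightarrow> 'a mpoly) \<Rightarrow> 'a mpoly" where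
  "msubst p v = (\<Sum>m\<in>Poly_Mapping.keys p.
      mconst (Poly_Mapping.lookup p m) * (\<Prod>i\<in>Poly_Mapping.keys m. v i ^ Poly_Mapping.lookup m i))"

(* i-th elementary symmetric polynomial in the variables r_0,...,r_{n-1}
  (variables 0..n-1 play the roles of the roots r_1,...,r_n). *)
definition esym :: "nat \<Rightarrow> nat \<Rightarrow> rat mpoly" where
  "esym n i = (\<Sum>S\<in>{S. S \<subseteq> {0..<n} \<and> card S = i}. \<Prod>j\<in>S. mvar j)"

definition D2_roots :: "nat \<Rightarrow> rat mpoly" where
  "D2_roots n = (\<Prod>(i,j,k)\<in>{(i,j,k). i < j \<and> j < n \<and> k < n \<and> k \<noteq> i \<and> k \<noteq> j}.
      2 * mvar k - mvar i - mvar j)"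

(* Vieta substitution a_m := (-1)^(n-m) s_(n-m) for m < n
  (variables 0..n-1 play the roles of the coefficients a_0,...,a_{n-1}). *)
definition vieta :: "nat \<Rightarrow> nat \<Rightarrow> rat mpoly" where
  "vieta n m = (-1) ^ (n - m) * esym n (n - m)"

definition D2 :: "nat \<Rightarrow> rat mpoly" where
  "D2 n = (THE P. mvars P \<subseteq> {0..<n} \<and> msubst P (vieta n) = D2_roots n)"

end

theory Submission
  imports Defs "HOL-Library.FuncSet"
begin


abbreviation lk where "lk \<equiv> Poly_Mapping.lookup"
abbreviation ks where "ks \<equiv> Poly_Mapping.keys"
abbreviation sg where "sg \<equiv> Poly_Mapping.single"

definition mon :: "(nat \<Rightarrow> 'a::comm_ring_1 mpoly) \<Rightarrow> (nat \<Rightarrow>\<^sub>0 nat) \<Rightarrow> 'a mpoly" where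
  "mon v m = (\<Prod>i\<in>ks m. v i ^ lk m i)"

lemma mconst_0[simp]: "mconst 0 = 0" by (simp add: mconst_def)
lemma mconst_1[simp]: "mconst 1 = 1" by (simp add: mconst_def)
lemma mconst_add: "mconst (a + b) = mconst a + mconst b" by (simp add: mconst_def single_add)
lemma mconst_diff: "mconst (a - b) = mconst a - mconst (b::'a::comm_ring_1)" by (simp add: mconst_def single_diff)
lemma mconst_mult: "mconst (a * b) = mconst a * mconst (b::'a::comm_ring_1)" by (simp add: mconst_def mult_single)

lemma poly_sum_singles: "p = (\<Sum>m\<in>ks p. sg m (lk p m))"
  by (rule poly_mapping_eqI) (simp add: lookup_sum lookup_single when_def in_keys_iff)

lemma mon_superset: "finite K \<Longrightarrow> ks m \<subseteq> K \<Longrightarrow> mon v m = (\<Prod>i\<in>K. v i ^ lk m i)"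
  unfolding mon_def by (rule prod.mono_neutral_left) (auto simp: in_keys_iff)

lemma mon_0[simp]: "mon v 0 = 1" by (simp add: mon_def)

lemma mon_add: "mon v (a + b) = mon v a * mon v b"
proof -
  let ?K = "ks a \<union> ks b"
  have "mon v (a+b) = (\<Prod>i\<in>?K. v i ^ lk (a+b) i)" using keys_add[of a b] by (intro mon_superset) auto
  also have "\<dots> = (\<Prod>i\<in>?K. v i ^ lk a i) * (\<Prod>i\<in>?K. v i ^ lk b i)"
    by (simp add: lookup_add power_add prod.distrib)
  also have "\<dots> = mon v a * mon v b" by (subst (1 2) mon_superset[of ?K]) auto
  finally show ?thesis .
qed

lemma msubst_superset: "finite K \<Longrightarrow> ks p \<subseteq> K \<Longrightarrow>
   msubst p v = (\<Sum>m\<in>K. mconst (lk p m) * mon v m)"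
  unfolding msubst_def mon_def[symmetric] by (rule sum.mono_neutral_left) (auto simp: in_keys_iff)

lemma msubst_add: "msubst (p + q) v = msubst p v + msubst q v"
proof -
  let ?K = "ks p \<union> ks q"
  have "msubst (p+q) v = (\<Sum>m\<in>?K. mconst (lk (p+q) m) * mon v m)" using keys_add[of p q] by (intro msubst_superset) auto
  also have "\<dots> = (\<Sum>m\<in>?K. mconst (lk p m) * mon v m) + (\<Sum>m\<in>?K. mconst (lk q m) * mon v m)"
    by (simp add: lookup_add mconst_add distrib_right sum.distrib)
  also have "\<dots> = msubst p v + msubst q v" by (subst (1 2) msubst_superset[of ?K]) auto
  finally show ?thesis .
qed

lemma msubst_0[simp]: "msubst 0 v = 0" by (simp add: msubst_def)

lemma msubst_sum: "msubst (\<Sum>i\<in>I. f i) v = (\<Sum>i\<in>I. msubst (f i) v)"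
  by (induction I rule: infinite_finite_induct) (auto simp: msubst_add)

lemma msubst_single: "msubst (sg m c) v = mconst c * mon v m"
  by (simp add: msubst_def mon_def)

lemma msubst_neg: "msubst (- p) v = - msubst p v"
  using msubst_add[of p "-p" v] by (simp add: eq_neg_iff_add_eq_0 add.commute)

lemma msubst_diff: "msubst (p - q) v = msubst p v - msubst q v"
  using msubst_add[of p "-q" v] by (simp add: msubst_neg)

lemma msubst_mult: "msubst (p * q) v = msubst p v * msubst q v"
proof -
  have "p * q = (\<Sum>a\<in>ks p. sg a (lk p a)) * (\<Sum>b\<in>ks q. sg b (lk q b))"
    by (subst poly_sum_singles[of p], subst poly_sum_singles[of q]) (rule refl)
  also have "\<dots> = (\<Sum>a\<in>ks p. \<Sum>b\<in>ks q. sg (a+b) (lk p a * lk q b))"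
    by (simp add: sum_distrib_left sum_distrib_right mult_single sum.swap[of _ "ks q"])
  finally have "msubst (p*q) v = (\<Sum>a\<in>ks p. \<Sum>b\<in>ks q. mconst (lk p a) * mon v a * (mconst (lk q b) * mon v b))"
    by (simp add: msubst_sum msubst_single mon_add mconst_mult ac_simps)
  also have "\<dots> = msubst p v * msubst q v"
    by (simp add: msubst_def mon_def sum_distrib_left sum_distrib_right sum.swap[of _ "ks q"])
  finally show ?thesis .
qed

lemma msubst_mconst[simp]: "msubst (mconst c) v = mconst c"
  by (simp add: mconst_def msubst_single)

lemma msubst_1[simp]: "msubst 1 v = 1"
  using msubst_mconst[of 1 v] by simp

lemma msubst_mvar[simp]: "msubst (mvar i) v = v i"
  by (simp add: mvar_def msubst_single mon_def)

lemma msubst_power: "msubst (p ^ k) v = msubst p v ^ k"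
  by (induction k) (auto simp: msubst_mult)

lemma msubst_prod: "msubst (\<Prod>i\<in>I. f i) v = (\<Prod>i\<in>I. msubst (f i) v)"
  by (induction I rule: infinite_finite_induct) (auto simp: msubst_mult)

lemma msubst_numeral[simp]: "msubst (numeral k) v = numeral k"
  using msubst_mconst[of "numeral k" v] by (simp add: mconst_def)

lemma msubst_mon: "msubst (mon w m) v = mon (\<lambda>i. msubst (w i) v) m"
  by (simp add: mon_def msubst_prod msubst_power)

lemma msubst_msubst: "msubst (msubst p w) v = msubst p (\<lambda>i. msubst (w i) v)"
  unfolding msubst_def[of p] by (simp add: msubst_sum msubst_mult msubst_mon[unfolded mon_def] mon_def)


lemma lookup_mult_keys: "lk (p * q) u = (\<Sum>a\<in>ks p. \<Sum>b\<in>ks q. if a + b = u then lk p a * lk q b else 0)"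
proof -
  have "p * q = (\<Sum>a\<in>ks p. sg a (lk p a)) * (\<Sum>b\<in>ks q. sg b (lk q b))"
    by (subst poly_sum_singles[of p], subst poly_sum_singles[of q]) (rule refl)
  also have "\<dots> = (\<Sum>a\<in>ks p. \<Sum>b\<in>ks q. sg (a+b) (lk p a * lk q b))"
    by (simp add: sum_distrib_left sum_distrib_right mult_single sum.swap[of _ "ks q"])
  finally show ?thesis by (simp add: lookup_sum lookup_single when_def)
qed

definition lead :: "'a::zero mpoly \<Rightarrow> (nat \<Rightarrow>\<^sub>0 nat)" where
  "lead p = (if ks p = {} then 0 else Max (ks p))"

lemma lead_in_keys: "p \<noteq> 0 \<Longrightarrow> lead p \<in> ks p"
  unfolding lead_def by (auto intro: Max_in)

lemma le_lead: "m \<in> ks p \<Longrightarrow> m \<le> lead p"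
  unfolding lead_def by (auto intro: Max_ge)

lemma lookup_gt_lead: "lead p < m \<Longrightarrow> lk p m = 0"
  using le_lead[of m p] by (auto simp: in_keys_iff dest: leD)

lemma lead_unique: "m \<in> ks p \<Longrightarrow> (\<And>m'. m' \<in> ks p \<Longrightarrow> m' \<le> m) \<Longrightarrow> lead p = m"
  unfolding lead_def by (auto intro: Max_eqI)

lemma lead_mult:
  fixes p q :: "'a::idom mpoly"
  assumes "p \<noteq> 0" "q \<noteq> 0"
  shows "lead (p * q) = lead p + lead q" "lk (p * q) (lead p + lead q) = lk p (lead p) * lk q (lead q)"
proof -
  let ?u = "lead p + lead q"
  have "lk (p * q) ?u = (\<Sum>a\<in>ks p. \<Sum>b\<in>ks q. if a = lead p \<and> b = lead q then lk p a * lk q b else 0)"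
    unfolding lookup_mult_keys
  proof (intro sum.cong refl)
    fix a b assume ab: "a \<in> ks p" "b \<in> ks q"
    have "a \<le> lead p" "b \<le> lead q" using ab le_lead by auto
    have "a + b = ?u \<Longrightarrow> a = lead p"
    proof (rule ccontr)
      assume "a + b = ?u" "a \<noteq> lead p"
      hence "a < lead p" using \<open>a \<le> lead p\<close> by simp
      hence "a + b < lead p + b" by (rule add_strict_right_mono)
      also have "\<dots> \<le> ?u" using \<open>b \<le> lead q\<close> by (rule add_left_mono)
      finally show False using \<open>a + b = ?u\<close> by simp
    qed
    hence "a + b = ?u \<longleftrightarrow> a = lead p \<and> b = lead q" by auto
    thus "(if a + b = ?u then lk p a * lk q b else 0) = (if a = lead p \<and> b = lead q then lk p a * lk q b else 0)" by simp
  qed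
  also have "\<dots> = lk p (lead p) * lk q (lead q)"
    using lead_in_keys[OF assms(1)] lead_in_keys[OF assms(2)]
  proof -
    have "\<And>a. (\<Sum>b\<in>ks q. if a = lead p \<and> b = lead q then lk p a * lk q b else 0)
       = (if a = lead p then lk p (lead p) * lk q (lead q) else 0)"
      using lead_in_keys[OF assms(2)] by (auto simp: sum.delta' cong: if_cong)
    thus ?thesis using lead_in_keys[OF assms(1)] by (simp add: sum.delta')
  qed
  finally show 2: "lk (p * q) ?u = lk p (lead p) * lk q (lead q)" .
  have "?u \<in> ks (p*q)" using 2 lead_in_keys[OF assms(1)] lead_in_keys[OF assms(2)] by (simp add: in_keys_iff)
  moreover have "m' \<le> ?u" if "m' \<in> ks (p*q)" for m'
    using that keys_mult[of p q] le_lead by (force intro: add_mono)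
  ultimately show "lead (p * q) = ?u" by (rule lead_unique)
qed

lemma mpoly_nonneg: "(0::nat \<Rightarrow>\<^sub>0 nat) \<le> m"
proof -
  have "\<not> m < 0" by (simp add: less_poly_mapping.rep_eq less_fun_def)
  thus ?thesis by simp
qed

lemma keys_sub0: "ks p \<subseteq> {0} \<Longrightarrow> p = mconst (lk p 0)"
  by (rule poly_mapping_eqI) (auto simp: mconst_def lookup_single when_def in_keys_iff)

lemma lead0_const: "lead p = 0 \<Longrightarrow> p = mconst (lk p 0)"
  using le_lead[of _ p] mpoly_nonneg by (intro keys_sub0) (force intro: antisym)

lemma lead_const[simp]: "lead (mconst c) = 0"
  by (simp add: lead_def mconst_def)

lemma monsum0: "(a::nat \<Rightarrow>\<^sub>0 nat) + b = 0 \<Longrightarrow> a = 0"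
  by (metis add_eq_0_iff_both_eq_0 lookup_add lookup_zero poly_mapping_eqI)

lemma unit_const:
  fixes p :: "'a::idom mpoly"
  assumes "p dvd 1" shows "p = mconst (lk p 0)" "lk p 0 \<noteq> 0"
proof -
  obtain q where q: "1 = p * q" using assms by (auto elim: dvdE)
  hence nz: "p \<noteq> 0" "q \<noteq> 0" by auto
  have "lead p + lead q = 0" using lead_mult(1)[OF nz] q[symmetric] by (simp add: lead_def)
  hence "lead p = 0" by (rule monsum0)
  thus 1: "p = mconst (lk p 0)" by (rule lead0_const)
  show "lk p 0 \<noteq> 0" using nz 1 by (metis mconst_0)
qed

lemma const_unit: "(c::'a::field) \<noteq> 0 \<Longrightarrow> mconst c dvd 1"
  by (rule dvdI[of _ _ "mconst (inverse c)"]) (simp add: mconst_mult[symmetric])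


definition perm :: "(nat \<Rightarrow> nat) \<Rightarrow> 'a::comm_ring_1 mpoly \<Rightarrow> 'a mpoly" where
  "perm \<sigma> p = msubst p (\<lambda>i. mvar (\<sigma> i))"

definition ren :: "(nat \<Rightarrow> nat) \<Rightarrow> (nat \<Rightarrow>\<^sub>0 nat) \<Rightarrow> (nat \<Rightarrow>\<^sub>0 nat)" where
  "ren \<sigma> m = (\<Sum>i\<in>ks m. sg (\<sigma> i) (lk m i))"

lemma mvar_power: "(mvar i :: 'a::comm_ring_1 mpoly) ^ e = sg (sg i e) 1"
  by (induction e) (auto simp: mvar_def mult_single single_add[symmetric] add.commute)

lemma prod_singles: "(\<Prod>i\<in>K. sg (f i) (1::'a::comm_ring_1)) = sg (\<Sum>i\<in>K. f i) 1"
  by (induction K rule: infinite_finite_induct) (auto simp: mult_single)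

lemma mon_mvar: "mon (\<lambda>i. mvar (\<sigma> i)) m = (sg (ren \<sigma> m) 1 :: 'a::comm_ring_1 mpoly)"
  by (simp add: mon_def mvar_power prod_singles ren_def)

lemma lookup_ren: "inj \<sigma> \<Longrightarrow> lk (ren \<sigma> m) (\<sigma> j) = lk m j"
  by (simp add: ren_def lookup_sum lookup_single when_def inj_eq sum.delta in_keys_iff cong: if_cong)

lemma ren_inj: "inj \<sigma> \<Longrightarrow> ren \<sigma> m = ren \<sigma> m' \<Longrightarrow> m = m'"
  by (metis lookup_ren poly_mapping_eqI)

lemma perm_expand: "perm \<sigma> p = (\<Sum>m\<in>ks p. sg (ren \<sigma> m) (lk p m))"
  by (simp add: perm_def msubst_def mon_def[symmetric] mon_mvar mconst_def mult_single)

lemma lookup_perm_ren: "inj \<sigma> \<Longrightarrow> lk (perm \<sigma> p) (ren \<sigma> m) = lk p m"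
proof -
  assume inj: "inj \<sigma>"
  have "lk (perm \<sigma> p) (ren \<sigma> m) = (\<Sum>m'\<in>ks p. if m' = m then lk p m' else 0)"
    unfolding perm_expand lookup_sum lookup_single when_def
    using ren_inj[OF inj] by (intro sum.cong) auto
  also have "\<dots> = lk p m" by (simp add: sum.delta in_keys_iff)
  finally show ?thesis .
qed

lemma keys_perm_ren: "inj \<sigma> \<Longrightarrow> m \<in> ks p \<Longrightarrow> ren \<sigma> m \<in> ks (perm \<sigma> p)"
  by (simp add: in_keys_iff lookup_perm_ren)

definition swp :: "nat \<Rightarrow> nat \<Rightarrow> nat \<Rightarrow> nat" where
  "swp a b x = (if x = a then b else if x = b then a else x)"

lemma swp_swp[simp]: "swp a b (swp a b x) = x" by (simp add: swp_def)
lemma inj_swp: "inj (swp a b)" by (metis injI swp_swp)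
lemma bij_swp: "bij (swp a b)" by (metis bijI' swp_swp)

definition symm :: "nat \<Rightarrow> 'a::comm_ring_1 mpoly \<Rightarrow> bool" where
  "symm n p \<longleftrightarrow> (\<forall>\<sigma>. bij \<sigma> \<and> (\<forall>i\<ge>n. \<sigma> i = i) \<longrightarrow> perm \<sigma> p = p)"

lemma lookup_ren_swp: "lk (ren (swp a b) m) k = lk m (swp a b k)"
  by (metis lookup_ren[OF inj_swp] swp_swp)

lemma lead_sym_mono:
  assumes "symm n F" "Suc j < n"
  shows "lk (lead F) (Suc j) \<le> lk (lead F) j"
proof (rule ccontr)
  assume less: "\<not> ?thesis"
  show False
  proof (cases "F = 0")
    case True thus False using less by (simp add: lead_def)
  next
    case False
    let ?\<sigma> = "swp j (Suc j)"
    let ?\<mu> = "lead F"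
    have "perm ?\<sigma> F = F" using assms bij_swp by (auto simp: symm_def swp_def)
    hence "ren ?\<sigma> ?\<mu> \<in> ks F" using keys_perm_ren[OF inj_swp lead_in_keys[OF False]] by metis
    hence le: "ren ?\<sigma> ?\<mu> \<le> ?\<mu>" by (rule le_lead)
    have "?\<mu> < ren ?\<sigma> ?\<mu>"
      unfolding less_poly_mapping.rep_eq less_fun_def
      using less by (intro exI[of _ j]) (auto simp: lookup_ren_swp swp_def)
    thus False using le by simp
  qed
qed

lemma perm_mvar[simp]: "perm \<sigma> (mvar i) = mvar (\<sigma> i)" by (simp add: perm_def)
lemma perm_mult: "perm \<sigma> (p * q) = perm \<sigma> p * perm \<sigma> q" by (simp add: perm_def msubst_mult)
lemma perm_prod: "perm \<sigma> (\<Prod>i\<in>I. f i) = (\<Prod>i\<in>I. perm \<sigma> (f i))" by (simp add: perm_def msubst_prod)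

lemma bij_fix_range:
  fixes \<sigma> :: "nat \<Rightarrow> nat"
  assumes "bij \<sigma>" "\<forall>i\<ge>n. \<sigma> i = i"
  shows "\<sigma> ` {0..<n} = {0..<n}"
proof -
  have inj: "inj \<sigma>" using assms bij_is_inj by blast
  have "\<sigma> x < n" if "x < n" for x
  proof (rule ccontr)
    assume "\<not> \<sigma> x < n"
    hence "\<sigma> (\<sigma> x) = \<sigma> x" using assms(2) by (simp add: not_less)
    hence "\<sigma> x = x" using inj by (simp add: inj_eq)
    thus False using that \<open>\<not> \<sigma> x < n\<close> by simp
  qed
  moreover have "y \<in> \<sigma> ` {0..<n}" if "y < n" for y
  proof -
    obtain x where x: "y = \<sigma> x" using assms(1) by (metis bij_pointE)
    have "x < n"
    proof (rule ccontr)
      assume "\<not> x < n" hence "\<sigma> x = x" using assms(2) by simp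
      thus False using x that \<open>\<not> x < n\<close> by simp
    qed
    thus ?thesis using x by auto
  qed
  ultimately show ?thesis by auto
qed

lemma esym_symm: "symm n (esym n k)"
  unfolding symm_def
proof (intro allI impI)
  fix \<sigma> :: "nat \<Rightarrow> nat" assume a: "bij \<sigma> \<and> (\<forall>i\<ge>n. \<sigma> i = i)"
  hence inj: "inj \<sigma>" by (simp add: bij_is_inj)
  have rng: "\<sigma> ` {0..<n} = {0..<n}" using a bij_fix_range by blast
  let ?A = "{S. S \<subseteq> {0..<n} \<and> card S = k}"
  have bb: "bij_betw (image \<sigma>) ?A ?A"
  proof (rule bij_betw_imageI)
    show "inj_on ((`) \<sigma>) ?A" using inj by (meson inj_image_eq_iff inj_onI)
    show "(`) \<sigma> ` ?A = ?A"
    proof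
      show "(`) \<sigma> ` ?A \<subseteq> ?A" using rng inj by (auto simp: card_image inj_on_subset)
      show "?A \<subseteq> (`) \<sigma> ` ?A"
      proof
        fix S assume S: "S \<in> ?A"
        let ?T = "{x\<in>{0..<n}. \<sigma> x \<in> S}"
        have "\<sigma> ` ?T = S"
        proof
          show "\<sigma> ` ?T \<subseteq> S" by auto
          show "S \<subseteq> \<sigma> ` ?T"
          proof
            fix y assume "y \<in> S"
            hence "y \<in> \<sigma> ` {0..<n}" using S rng by auto
            then obtain x where "x < n" "y = \<sigma> x" by auto
            thus "y \<in> \<sigma> ` ?T" using \<open>y \<in> S\<close> by auto
          qed
        qed
        moreover hence "?T \<in> ?A" using S inj by (auto simp: card_image inj_on_subset)
          (metis card_image inj_on_subset subset_UNIV)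
        ultimately show "S \<in> (`) \<sigma> ` ?A" by blast
      qed
    qed
  qed
  have "perm \<sigma> (esym n k) = (\<Sum>S\<in>?A. \<Prod>j\<in>S. mvar (\<sigma> j))"
    by (simp add: esym_def perm_def msubst_sum msubst_prod)
  also have "\<dots> = (\<Sum>S\<in>?A. \<Prod>j\<in>\<sigma> ` S. mvar j)"
    using inj by (intro sum.cong refl) (simp add: prod.reindex inj_on_subset)
  also have "\<dots> = esym n k"
    unfolding esym_def using sum.reindex_bij_betw[OF bb, of "\<lambda>S. \<Prod>j\<in>S. mvar j"] by simp
  finally show "perm \<sigma> (esym n k) = esym n k" .
qed

lemma perm_msubst: "perm \<sigma> (msubst a v) = msubst a (\<lambda>i. perm \<sigma> (v i))"
  by (simp add: perm_def msubst_msubst)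

lemma msubst_neg1_power: "msubst ((-1) ^ k) v = (-1) ^ k"
  by (simp add: msubst_power msubst_neg)

lemma vieta_symm: "symm n (msubst a (vieta n))"
  unfolding symm_def perm_msubst
proof (intro allI impI)
  fix \<sigma> :: "nat \<Rightarrow> nat" assume a: "bij \<sigma> \<and> (\<forall>i\<ge>n. \<sigma> i = i)"
  have "perm \<sigma> (vieta n i) = vieta n i" for i
    using esym_symm[of n "n - i"] a
    by (simp add: vieta_def perm_mult symm_def) (simp add: perm_def msubst_neg1_power)
  thus "msubst a (\<lambda>i. perm \<sigma> (vieta n i)) = msubst a (vieta n)" by simp
qed


lemma lookup_mconst_mult: "lk (mconst c * p) u = c * lk p u"
  by (simp add: lookup_mult_keys mconst_def lookup_single when_def if_distrib sum.delta' cong: if_cong)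
     (auto simp: in_keys_iff)

lemma lead_prod:
  fixes f :: "'b \<Rightarrow> 'a::idom mpoly"
  assumes "finite I" "\<And>i. i \<in> I \<Longrightarrow> f i \<noteq> 0"
  shows "(\<Prod>i\<in>I. f i) \<noteq> 0 \<and> lead (\<Prod>i\<in>I. f i) = (\<Sum>i\<in>I. lead (f i)) \<and>
         lk (\<Prod>i\<in>I. f i) (\<Sum>i\<in>I. lead (f i)) = (\<Prod>i\<in>I. lk (f i) (lead (f i)))"
  using assms
proof (induction I rule: finite_induct)
  case empty thus ?case by (simp add: lead_def)
next
  case (insert x F)
  hence nz: "f x \<noteq> 0" "(\<Prod>i\<in>F. f i) \<noteq> 0" by auto
  show ?case using lead_mult[OF nz] insert nz by auto
qed


definition indS :: "nat set \<Rightarrow> (nat \<Rightarrow>\<^sub>0 nat)" where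
  "indS S = (\<Sum>j\<in>S. sg j 1)"

lemma lookup_indS: "finite S \<Longrightarrow> lk (indS S) j = (if j \<in> S then 1 else 0)"
  by (simp add: indS_def lookup_sum lookup_single when_def)

lemma indS_inj: "finite S \<Longrightarrow> finite T \<Longrightarrow> indS S = indS T \<Longrightarrow> S = T"
  by (metis lookup_indS one_neq_zero subsetI subset_antisym)

abbreviation EA :: "nat \<Rightarrow> nat \<Rightarrow> nat set set" where
  "EA n k \<equiv> {S. S \<subseteq> {0..<n} \<and> card S = k}"

lemma finite_EA: "finite (EA n k)"
  by (rule finite_subset[of _ "Pow {0..<n}"]) auto

lemma esym_singles: "esym n k = (\<Sum>S\<in>EA n k. sg (indS S) 1)"
  unfolding esym_def mvar_def indS_def by (intro sum.cong refl prod_singles)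

lemma lookup_esym: "lk (esym n k) u = (\<Sum>S\<in>EA n k. if indS S = u then 1 else 0)"
  by (simp add: esym_singles lookup_sum lookup_single when_def)

lemma lookup_esym_indS: "S0 \<in> EA n k \<Longrightarrow> lk (esym n k) (indS S0) = 1"
proof -
  assume S0: "S0 \<in> EA n k"
  have "lk (esym n k) (indS S0) = (\<Sum>S\<in>EA n k. if S = S0 then 1 else 0)"
    unfolding lookup_esym
  proof (intro sum.cong refl)
    fix S assume "S \<in> EA n k"
    hence "finite S" "finite S0" using S0 by (auto intro: finite_subset)
    thus "(if indS S = indS S0 then 1 else 0) = (if S = S0 then 1 else (0::rat))"
      using indS_inj by metis
  qed
  also have "\<dots> = 1" using S0 finite_EA by (simp add: sum.delta)
  finally show ?thesis .
qed

lemma keys_esym: "ks (esym n k) \<subseteq> indS ` EA n k"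
proof
  fix u assume "u \<in> ks (esym n k)"
  hence "(\<Sum>S\<in>EA n k. if indS S = u then 1 else 0) \<noteq> (0::rat)" by (simp add: in_keys_iff lookup_esym)
  then obtain S where "S \<in> EA n k" "indS S = u" by (metis (mono_tags, lifting) sum.neutral)
  thus "u \<in> indS ` EA n k" by auto
qed

lemma indS_le:
  assumes S: "S \<in> EA n k"
  shows "indS S \<le> indS {0..<k}"
proof (cases "S = {0..<k}")
  case True thus ?thesis by simp
next
  case False
  have finS: "finite S" using S by (auto intro: finite_subset)
  have "\<not> {0..<k} \<subseteq> S"
  proof
    assume "{0..<k} \<subseteq> S"
    moreover have "card S = card {0..<k}" using S by simp
    ultimately show False using False finS by (metis card_subset_eq)
  qed
  then obtain j0 where "j0 \<in> {0..<k} - S" by blast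
  define j where "j = (LEAST j. j \<in> {0..<k} - S)"
  have j: "j \<in> {0..<k} - S" unfolding j_def by (rule LeastI) fact
  have jl: "j' \<in> S" if "j' < j" for j'
    using that j not_less_Least[of j' "\<lambda>j. j \<in> {0..<k} - S"] unfolding j_def[symmetric] by auto
  have "indS S < indS {0..<k}"
    unfolding less_poly_mapping.rep_eq less_fun_def
    using j jl finS by (intro exI[of _ j]) (auto simp: lookup_indS)
  thus ?thesis by simp
qed

lemma lead_esym:
  assumes "k \<le> n"
  shows "lead (esym n k) = indS {0..<k}" "lk (esym n k) (indS {0..<k}) = 1"
proof -
  have mem: "{0..<k} \<in> EA n k" using assms by auto
  show 1: "lk (esym n k) (indS {0..<k}) = 1" by (rule lookup_esym_indS[OF mem])
  show "lead (esym n k) = indS {0..<k}"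
  proof (rule lead_unique)
    show "indS {0..<k} \<in> ks (esym n k)" using 1 by (simp add: in_keys_iff)
    fix m' assume "m' \<in> ks (esym n k)"
    then obtain S where "S \<in> EA n k" "m' = indS S" using keys_esym by blast
    thus "m' \<le> indS {0..<k}" using indS_le by blast
  qed
qed

lemma neg1_power_const: "((-1) ^ k :: 'a::comm_ring_1 mpoly) = mconst ((-1) ^ k)"
  by (induction k) (auto simp: mconst_mult mconst_def single_uminus)

lemma lead_mconst_mult:
  fixes p :: "'a::idom mpoly"
  assumes "c \<noteq> 0" "p \<noteq> 0"
  shows "lead (mconst c * p) = lead p"
proof -
  have "mconst c \<noteq> 0" using assms(1) unfolding mconst_def by (metis lookup_single_eq lookup_zero)
  thus ?thesis using lead_mult(1)[of "mconst c" p] assms lead_const[of c] by simp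
qed

lemma vieta_nz: "i < n \<Longrightarrow> vieta n i \<noteq> 0"
  using lead_esym(2)[of "n - i" n] lookup_mconst_mult[of "(-1)^(n-i)" "esym n (n-i)"]
  by (auto simp: vieta_def neg1_power_const)

lemma lead_vieta: "i < n \<Longrightarrow> lead (vieta n i) = indS {0..<n-i} \<and> lk (vieta n i) (indS {0..<n-i}) = (-1)^(n-i)"
proof -
  assume i: "i < n"
  have nz: "esym n (n-i) \<noteq> 0" using lead_esym(2)[of "n - i" n] by auto
  show ?thesis unfolding vieta_def neg1_power_const
    using lead_mconst_mult[OF _ nz, of "(-1)^(n-i)"] lead_esym[of "n-i" n]
    by (simp add: lookup_mconst_mult)
qed




definition phi :: "nat \<Rightarrow> (nat \<Rightarrow>\<^sub>0 nat) \<Rightarrow> (nat \<Rightarrow>\<^sub>0 nat)" where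
  "phi n m = (\<Sum>i\<in>ks m. \<Sum>_\<in>{..<lk m i}. indS {0..<n-i})"

lemma mon_as_prod: "mon v m = (\<Prod>i\<in>ks m. \<Prod>_\<in>{..<lk m i}. v i)"
  by (simp add: mon_def)

lemma mon_vieta:
  assumes "ks m \<subseteq> {0..<n}"
  shows "mon (vieta n) m \<noteq> 0 \<and> lead (mon (vieta n) m) = phi n m \<and> lk (mon (vieta n) m) (phi n m) \<noteq> 0"
proof -
  have inner: "(\<Prod>_\<in>{..<lk m i}. vieta n i) \<noteq> 0 \<and> lead (\<Prod>_\<in>{..<lk m i}. vieta n i) = (\<Sum>_\<in>{..<lk m i}. indS {0..<n-i})
     \<and> lk (\<Prod>_\<in>{..<lk m i}. vieta n i) (\<Sum>_\<in>{..<lk m i}. indS {0..<n-i}) \<noteq> 0" if "i \<in> ks m" for i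
  proof -
    have i: "i < n" using that assms by auto
    show ?thesis using lead_prod[of "{..<lk m i}" "\<lambda>_. vieta n i"] vieta_nz[OF i] lead_vieta[OF i]
      by simp
  qed
  have "mon (vieta n) m \<noteq> 0 \<and> lead (mon (vieta n) m) = phi n m \<and>
     lk (mon (vieta n) m) (phi n m) = (\<Prod>i\<in>ks m. lk (\<Prod>_\<in>{..<lk m i}. vieta n i) (lead (\<Prod>_\<in>{..<lk m i}. vieta n i)))"
    unfolding mon_as_prod phi_def
    using lead_prod[of "ks m" "\<lambda>i. \<Prod>_\<in>{..<lk m i}. vieta n i"] inner
    by (simp cong: sum.cong)
  moreover have "(\<Prod>i\<in>ks m. lk (\<Prod>_\<in>{..<lk m i}. vieta n i) (lead (\<Prod>_\<in>{..<lk m i}. vieta n i))) \<noteq> 0"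
    using inner by (simp add: prod_zero_iff)
  ultimately show ?thesis by simp
qed

lemma lookup_phi:
  assumes "ks m \<subseteq> {0..<n}"
  shows "lk (phi n m) j = (\<Sum>i<n-j. lk m i)"
proof -
  have "lk (phi n m) j = (\<Sum>i\<in>ks m. if j < n - i then lk m i else 0)"
    unfolding phi_def lookup_sum by (simp add: lookup_indS if_distrib cong: if_cong)
  also have "\<dots> = (\<Sum>i\<in>{..<n}. if j < n - i then lk m i else 0)"
    using assms by (intro sum.mono_neutral_left) (auto simp: in_keys_iff)
  also have "\<dots> = (\<Sum>i\<in>{i\<in>{..<n}. j < n - i}. lk m i)"
    by (simp add: sum.inter_filter[symmetric])
  also have "{i\<in>{..<n}. j < n - i} = {..<n-j}" by auto
  finally show ?thesis .
qed

lemma phi_inj: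
  assumes "ks m \<subseteq> {0..<n}" "ks m' \<subseteq> {0..<n}" "phi n m = phi n m'"
  shows "m = m'"
proof (rule poly_mapping_eqI)
  fix i
  show "lk m i = lk m' i"
  proof (cases "i < n")
    case False
    hence "i \<notin> ks m" "i \<notin> ks m'" using assms by auto
    thus ?thesis by (simp add: in_keys_iff)
  next
    case True
    have "(\<Sum>i'<Suc i. lk m i') = (\<Sum>i'<Suc i. lk m' i')"
      using lookup_phi[OF assms(1), of "n - Suc i"] lookup_phi[OF assms(2), of "n - Suc i"] assms(3) True
      by (simp add: Suc_diff_Suc)
    moreover have "(\<Sum>i'<i. lk m i') = (\<Sum>i'<i. lk m' i')"
      using lookup_phi[OF assms(1), of "n - i"] lookup_phi[OF assms(2), of "n - i"] assms(3) True
      by simp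
    ultimately show ?thesis by simp
  qed
qed

lemma lookup_msubst: "lk (msubst a v) u = (\<Sum>m\<in>ks a. lk a m * lk (mon v m) u)"
  by (simp add: msubst_def mon_def lookup_sum lookup_mconst_mult)

lemma Phi_nz:
  assumes "a \<noteq> 0" "\<forall>m\<in>ks a. ks m \<subseteq> {0..<n}"
  shows "msubst a (vieta n) \<noteq> 0"
proof -
  have fin: "finite (phi n ` ks a)" "phi n ` ks a \<noteq> {}" using assms(1) by auto
  define u where "u = Max (phi n ` ks a)"
  have "u \<in> phi n ` ks a" unfolding u_def using fin by (rule Max_in)
  then obtain m0 where m0: "m0 \<in> ks a" "phi n m0 = u" by auto
  have lt: "phi n m < u" if "m \<in> ks a" "m \<noteq> m0" for m
  proof -
    have "phi n m \<le> u" unfolding u_def using fin that by auto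
    moreover have "phi n m \<noteq> u" using phi_inj[of m n m0] assms(2) that m0 by auto
    ultimately show ?thesis by simp
  qed
  have "lk (msubst a (vieta n)) u = (\<Sum>m\<in>ks a. if m = m0 then lk a m0 * lk (mon (vieta n) m0) u else 0)"
    unfolding lookup_msubst
  proof (intro sum.cong refl)
    fix m assume m: "m \<in> ks a"
    show "lk a m * lk (mon (vieta n) m) u = (if m = m0 then lk a m0 * lk (mon (vieta n) m0) u else 0)"
    proof (cases "m = m0")
      case False
      have "lead (mon (vieta n) m) < u" using mon_vieta[of m n] assms(2) m lt[OF m False] by auto
      thus ?thesis using False lookup_gt_lead by auto
    qed simp
  qed
  also have "\<dots> = lk a m0 * lk (mon (vieta n) m0) u" using m0 by (simp add: sum.delta)
  also have "\<dots> \<noteq> 0" using mon_vieta[of m0 n] assms(2) m0 by (auto simp: in_keys_iff)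
  finally show ?thesis by auto
qed


definition Bnd :: "nat \<Rightarrow> nat \<Rightarrow> (nat \<Rightarrow>\<^sub>0 nat) set" where
  "Bnd n d = {\<nu>. ks \<nu> \<subseteq> {0..<n} \<and> (\<forall>j. lk \<nu> j \<le> d)}"

lemma finite_Bnd: "finite (Bnd n d)"
proof -
  let ?g = "\<lambda>f. \<Sum>j<n. sg j (f j)"
  have "Bnd n d \<subseteq> ?g ` (PiE {..<n} (\<lambda>_. {..d}))"
  proof
    fix \<nu> assume \<nu>: "\<nu> \<in> Bnd n d"
    have "\<nu> = ?g (restrict (lk \<nu>) {..<n})"
    proof (rule poly_mapping_eqI)
      fix k
      show "lk \<nu> k = lk (?g (restrict (lk \<nu>) {..<n})) k"
        using \<nu> by (auto simp: lookup_sum lookup_single when_def Bnd_def in_keys_iff restrict_def)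
    qed
    moreover have "restrict (lk \<nu>) {..<n} \<in> PiE {..<n} (\<lambda>_. {..d})" using \<nu> by (auto simp: Bnd_def)
    ultimately show "\<nu> \<in> ?g ` (PiE {..<n} (\<lambda>_. {..d}))" by blast
  qed
  moreover have "finite (PiE {..<n} (\<lambda>_. {..d::nat}))" by (intro finite_PiE) auto
  ultimately show ?thesis by (meson finite_imageI finite_subset)
qed

lemma Bnd_mono: "d \<le> d' \<Longrightarrow> Bnd n d \<subseteq> Bnd n d'"
  by (auto simp: Bnd_def intro: le_trans)

lemma Bnd_add: "a \<in> Bnd n d1 \<Longrightarrow> b \<in> Bnd n d2 \<Longrightarrow> a + b \<in> Bnd n (d1 + d2)"
  using keys_add[of a b] by (auto simp: Bnd_def lookup_add add_mono)

lemma keys_mult_Bnd: "ks p \<subseteq> Bnd n d1 \<Longrightarrow> ks q \<subseteq> Bnd n d2 \<Longrightarrow> ks (p * q) \<subseteq> Bnd n (d1 + d2)"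
  using keys_mult[of p q] Bnd_add by blast

lemma keys_prod_Bnd:
  "(\<And>i. i \<in> I \<Longrightarrow> ks (f i) \<subseteq> Bnd n (d i)) \<Longrightarrow> ks (\<Prod>i\<in>I. f i) \<subseteq> Bnd n (\<Sum>i\<in>I. d i)"
proof (induction I rule: infinite_finite_induct)
  case (infinite A) thus ?case by (auto simp: Bnd_def)
next
  case empty thus ?case by (auto simp: Bnd_def)
next
  case (insert x F) thus ?case by (simp add: keys_mult_Bnd)
qed

lemma keys_mconst_mult: "ks (mconst c * p) \<subseteq> ks p"
  by (auto simp: in_keys_iff lookup_mconst_mult)

lemma keys_vieta_Bnd: "ks (vieta n i) \<subseteq> Bnd n 1"
proof -
  have "ks (esym n (n - i)) \<subseteq> Bnd n 1"
  proof
    fix x assume "x \<in> ks (esym n (n - i))"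
    then obtain S where S: "S \<in> EA n (n-i)" "x = indS S" using keys_esym by blast
    hence fin: "finite S" by (auto intro: finite_subset)
    have "ks x = S" using S(2) fin by (auto simp: in_keys_iff lookup_indS split: if_splits)
    thus "x \<in> Bnd n 1" using S fin by (auto simp: Bnd_def lookup_indS)
  qed
  thus ?thesis unfolding vieta_def neg1_power_const using keys_mconst_mult by blast
qed

lemma keys_mon_Bnd: "ks (mon (vieta n) m) \<subseteq> Bnd n (\<Sum>i\<in>ks m. lk m i)"
proof -
  have inner: "ks (\<Prod>_\<in>{..<lk m i}. vieta n i) \<subseteq> Bnd n (\<Sum>_\<in>{..<lk m i}. 1)" for i
    by (rule keys_prod_Bnd) (rule keys_vieta_Bnd)
  have "ks (mon (vieta n) m) \<subseteq> Bnd n (\<Sum>i\<in>ks m. \<Sum>_\<in>{..<lk m i}. 1)"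
    unfolding mon_as_prod by (rule keys_prod_Bnd, rule inner)
  thus ?thesis by simp
qed

lemma symm_diff: "symm n p \<Longrightarrow> symm n q \<Longrightarrow> symm n (p - q)"
  by (simp add: symm_def perm_def msubst_diff)

lemma telescope:
  fixes \<mu> :: "nat \<Rightarrow> nat"
  assumes "\<mu> n = 0" "\<And>j. Suc j < n \<Longrightarrow> \<mu> (Suc j) \<le> \<mu> j"
  shows "k \<le> n \<Longrightarrow> (\<Sum>i<k. \<mu> (n - 1 - i) - \<mu> (n - i)) = \<mu> (n - k)"
proof (induction k)
  case 0 thus ?case using assms by simp
next
  case (Suc k)
  have le: "\<mu> (n - k) \<le> \<mu> (n - Suc k)"
  proof (cases k)
    case 0 thus ?thesis using assms(1) by simp
  next
    case (Suc k')
    have e: "Suc (n - Suc k) = n - k" using Suc.prems by simp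
    have "n - k < n" using Suc.prems \<open>k = Suc k'\<close> by simp
    thus ?thesis using assms(2)[of "n - Suc k"] e by simp
  qed
  have "n - 1 - k = n - Suc k" by simp
  thus ?case using Suc le by simp
qed

lemma FT:
  assumes "symm n F" "ks F \<subseteq> Bnd n D"
  shows "\<exists>P. (\<forall>m\<in>ks P. ks m \<subseteq> {0..<n}) \<and> msubst P (vieta n) = F"
proof -
  define N where "N = card {\<nu>\<in>Bnd n D. \<nu> \<le> lead F}"
  show ?thesis using assms N_def
  proof (induction N arbitrary: F rule: less_induct)
    case (less N F)
    show ?case
    proof (cases "F = 0")
      case True thus ?thesis by (intro exI[of _ 0]) auto
    next
      case False
      define \<mu> where "\<mu> = lead F"
      have \<mu>B: "\<mu> \<in> Bnd n D" using lead_in_keys[OF False] less.prems(2) \<mu>_def by auto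
      have mono: "\<And>j. Suc j < n \<Longrightarrow> lk \<mu> (Suc j) \<le> lk \<mu> j"
        using lead_sym_mono[OF less.prems(1)] \<mu>_def by auto
      have \<mu>n: "lk \<mu> j = 0" if "j \<ge> n" for j using \<mu>B that by (auto simp: Bnd_def in_keys_iff)
      define m where "m = (\<Sum>i<n. sg i (lk \<mu> (n - 1 - i) - lk \<mu> (n - i)))"
      have lkm: "lk m i = (if i < n then lk \<mu> (n - 1 - i) - lk \<mu> (n - i) else 0)" for i
        by (simp add: m_def lookup_sum lookup_single when_def)
      have ksm: "ks m \<subseteq> {0..<n}" by (auto simp: in_keys_iff lkm split: if_splits)
      have phim: "phi n m = \<mu>"
      proof (rule poly_mapping_eqI)
        fix j
        show "lk (phi n m) j = lk \<mu> j"
        proof (cases "j < n")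
          case True
          have "lk (phi n m) j = (\<Sum>i<n-j. lk \<mu> (n - 1 - i) - lk \<mu> (n - i))"
            unfolding lookup_phi[OF ksm] by (intro sum.cong refl) (auto simp: lkm)
          also have "\<dots> = lk \<mu> (n - (n - j))" using telescope[of "lk \<mu>" n "n - j"] \<mu>n mono by simp
          finally show ?thesis using True by simp
        next
          case False thus ?thesis using lookup_phi[OF ksm, of j] \<mu>n by simp
        qed
      qed
      define M where "M = mon (vieta n) m"
      have M: "M \<noteq> 0" "lead M = \<mu>" "lk M \<mu> \<noteq> 0" using mon_vieta[OF ksm] phim M_def by auto
      define c where "c = lk F \<mu> / lk M \<mu>"
      define G where "G = mconst c * M"
      have G: "msubst (sg m c) (vieta n) = G" by (simp add: msubst_single G_def M_def)
      have symG: "symm n G" using vieta_symm G by metis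
      define F' where "F' = F - G"
      have symF': "symm n F'" unfolding F'_def by (rule symm_diff[OF less.prems(1) symG])
      have sumB: "(\<Sum>i\<in>ks m. lk m i) \<le> D"
      proof -
        have "(\<Sum>i\<in>ks m. lk m i) = (\<Sum>i<n. lk m i)"
          using ksm by (intro sum.mono_neutral_left) (auto simp: in_keys_iff)
        also have "\<dots> = lk \<mu> 0" using lookup_phi[OF ksm, of 0] phim by simp
        also have "\<dots> \<le> D" using \<mu>B by (auto simp: Bnd_def)
        finally show ?thesis .
      qed
      have ksG: "ks G \<subseteq> Bnd n D"
        using keys_mconst_mult[of c M] keys_mon_Bnd[of n m] Bnd_mono[OF sumB] by (auto simp: G_def M_def)
      have ksF': "ks F' \<subseteq> Bnd n D" using keys_diff[of F G] ksG less.prems(2) by (auto simp: F'_def)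
      have F'mu: "lk F' \<mu> = 0" using M by (simp add: F'_def G_def lookup_minus lookup_mconst_mult c_def)
      have F'le: "\<nu> \<le> \<mu>" if "\<nu> \<in> ks F'" for \<nu>
      proof -
        have "\<nu> \<in> ks F \<or> \<nu> \<in> ks M" using that keys_diff[of F G] keys_mconst_mult[of c M]
          by (auto simp: F'_def G_def)
        thus ?thesis using le_lead \<mu>_def M(2) by metis
      qed
      show ?thesis
      proof (cases "F' = 0")
        case True
        hence "msubst (sg m c) (vieta n) = F" using G F'_def by simp
        thus ?thesis using ksm by (intro exI[of _ "sg m c"]) auto
      next
        case F'nz: False
        have "lead F' \<le> \<mu>" using F'le lead_in_keys[OF F'nz] by blast
        moreover have "lead F' \<noteq> \<mu>" using lead_in_keys[OF F'nz] F'mu by (auto simp: in_keys_iff)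
        ultimately have lt: "lead F' < \<mu>" by simp
        have "{\<nu>\<in>Bnd n D. \<nu> \<le> lead F'} \<subset> {\<nu>\<in>Bnd n D. \<nu> \<le> lead F}"
        proof
          show "{\<nu>\<in>Bnd n D. \<nu> \<le> lead F'} \<subseteq> {\<nu>\<in>Bnd n D. \<nu> \<le> lead F}"
            using lt \<mu>_def by auto
          have "\<mu> \<notin> {\<nu>\<in>Bnd n D. \<nu> \<le> lead F'}" using lt by auto
          moreover have "\<mu> \<in> {\<nu>\<in>Bnd n D. \<nu> \<le> lead F}" using \<mu>B \<mu>_def by auto
          ultimately show "{\<nu>\<in>Bnd n D. \<nu> \<le> lead F'} \<noteq> {\<nu>\<in>Bnd n D. \<nu> \<le> lead F}" by blast
        qed
        hence "card {\<nu>\<in>Bnd n D. \<nu> \<le> lead F'} < N"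
          using less.prems(3) psubset_card_mono[OF _ \<open>_ \<subset> _\<close>] finite_Bnd[of n D] by auto
        then obtain P' where P': "\<forall>m\<in>ks P'. ks m \<subseteq> {0..<n}" "msubst P' (vieta n) = F'"
          using less.IH symF' ksF' by blast
        have "msubst (P' + sg m c) (vieta n) = F" using P' G by (simp add: msubst_add F'_def)
        moreover have "\<forall>m'\<in>ks (P' + sg m c). ks m' \<subseteq> {0..<n}"
          using keys_add[of P' "sg m c"] P'(1) ksm by (auto split: if_splits)
        ultimately show ?thesis by blast
      qed
    qed
  qed
qed




lemma mon_mvar_id: "mon mvar m = (sg m 1 :: 'a::comm_ring_1 mpoly)"
proof -
  have "ren (\<lambda>i. i) m = m" unfolding ren_def by (rule poly_sum_singles[symmetric])
  thus ?thesis using mon_mvar[of "\<lambda>i. i" m] by simp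
qed

lemma msubst_id: "msubst p mvar = p"
proof -
  have "msubst p mvar = (\<Sum>m\<in>ks p. sg m (lk p m))"
    unfolding msubst_def mon_def[symmetric] mon_mvar_id by (simp add: mconst_def mult_single)
  thus ?thesis using poly_sum_singles[of p] by simp
qed

definition ev0 :: "nat \<Rightarrow> 'a::comm_ring_1 mpoly \<Rightarrow> 'a mpoly" where
  "ev0 k p = msubst p (mvar(k := 0))"

lemma ev0_expand: "ev0 k (p::'a::comm_ring_1 mpoly) = (\<Sum>m\<in>{m\<in>ks p. k \<notin> ks m}. sg m (lk p m))"
proof -
  have "ev0 k p = (\<Sum>m\<in>ks p. if k \<in> ks m then 0 else sg m (lk p m))"
    unfolding ev0_def msubst_def mon_def[symmetric]
  proof (intro sum.cong refl)
    fix m assume "m \<in> ks p"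
    show "mconst (lk p m) * mon (mvar(k := 0)) m = (if k \<in> ks m then 0 else sg m (lk p m))"
    proof (cases "k \<in> ks m")
      case True
      have "mon (mvar(k := 0)) m = (0::'a mpoly)" unfolding mon_def using True
        by (intro prod_zero) (auto intro!: bexI[of _ k] simp: in_keys_iff zero_power)
      thus ?thesis using True by simp
    next
      case False
      have "mon (mvar(k := 0)) m = (mon mvar m :: 'a mpoly)" unfolding mon_def using False by (intro prod.cong) auto
      thus ?thesis using False by (simp add: mon_mvar_id mconst_def mult_single)
    qed
  qed
  also have "\<dots> = (\<Sum>m\<in>{m\<in>ks p. k \<notin> ks m}. sg m (lk p m))"
    by (rule sum.mono_neutral_cong_right) auto
  finally show ?thesis .
qed

lemma ev0_zero_dvd:
  fixes p :: "'a::comm_ring_1 mpoly"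
  assumes "ev0 k p = 0" shows "mvar k dvd p"
proof -
  have allk: "k \<in> ks m" if "m \<in> ks p" for m
  proof (rule ccontr)
    assume "k \<notin> ks m"
    hence "lk (ev0 k p) m = lk p m"
      unfolding ev0_expand lookup_sum lookup_single using that
      by (simp add: when_def sum.delta)
    thus False using assms that by (simp add: in_keys_iff)
  qed
  define Q where "Q = (\<Sum>m\<in>ks p. sg (m - sg k 1) (lk p m))"
  have "mvar k * Q = (\<Sum>m\<in>ks p. sg (sg k 1 + (m - sg k 1)) (lk p m))"
    by (simp add: Q_def mvar_def sum_distrib_left mult_single)
  also have "\<dots> = (\<Sum>m\<in>ks p. sg m (lk p m))"
  proof (intro sum.cong refl)
    fix m assume "m \<in> ks p"
    hence "lk m k \<ge> 1" using allk by (simp add: in_keys_iff Suc_le_eq)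
    hence "sg k 1 + (m - sg k 1) = m"
      by (intro poly_mapping_eqI) (auto simp: lookup_add lookup_minus lookup_single when_def)
    thus "sg (sg k 1 + (m - sg k 1)) (lk p m) = sg m (lk p m)" by simp
  qed
  also have "\<dots> = p" by (rule poly_sum_singles[symmetric])
  finally show ?thesis by (metis dvdI)
qed

lemma mvar_prime:
  fixes p q :: "'a::idom mpoly"
  assumes "mvar k dvd p * q" shows "mvar k dvd p \<or> mvar k dvd q"
proof -
  obtain r where "p * q = mvar k * r" using assms by (auto elim: dvdE)
  hence "ev0 k p * ev0 k q = 0" by (simp add: ev0_def msubst_mult[symmetric] msubst_mult)
  thus ?thesis using ev0_zero_dvd by auto
qed


definition Lf :: "nat \<times> nat \<times> nat \<Rightarrow> rat mpoly" where
  "Lf t = (case t of (i, j, k) \<Rightarrow> 2 * mvar k - mvar i - mvar j)"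

lemma two_mconst: "(2::rat mpoly) * mconst (1/2) = 1"
  by (simp add: mconst_def mult_single flip: single_numeral)

lemma L_prime:
  assumes "i \<noteq> k" "j \<noteq> k" "Lf (i, j, k) dvd X * Y"
  shows "Lf (i, j, k) dvd X \<or> Lf (i, j, k) dvd Y"
proof -
  let ?L = "Lf (i, j, k)"
  define w where "w = (mvar :: nat \<Rightarrow> rat mpoly)(k := mconst (1/2) * (mvar k + mvar i + mvar j))"
  define w' where "w' = (mvar :: nat \<Rightarrow> rat mpoly)(k := ?L)"
  have wL: "msubst ?L w = mvar k"
  proof -
    have "msubst ?L w = 2 * (mconst (1/2) * (mvar k + mvar i + mvar j)) - mvar i - mvar j"
      using assms by (simp add: Lf_def w_def msubst_diff msubst_mult)
    also have "\<dots> = (2 * mconst (1/2)) * (mvar k + mvar i + mvar j) - mvar i - mvar j"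
      by (simp add: mult.assoc)
    also have "\<dots> = mvar k" by (simp add: two_mconst)
    finally show ?thesis .
  qed
  have inv: "msubst (msubst F w) w' = F" for F
  proof -
    have "(\<lambda>l. msubst (w l) w') = mvar"
    proof
      fix l show "msubst (w l) w' = mvar l"
      proof (cases "l = k")
        case True
        have "msubst (w l) w' = mconst (1/2) * (?L + mvar i + mvar j)"
          using True assms by (simp add: w_def w'_def msubst_mult msubst_add)
        also have "\<dots> = mconst (1/2) * 2 * mvar k" by (simp add: Lf_def algebra_simps)
        also have "\<dots> = mvar l" using True two_mconst by (simp add: mult.commute)
        finally show ?thesis .
      qed (simp add: w_def w'_def)
    qed
    thus ?thesis by (simp add: msubst_msubst msubst_id)
  qed
  obtain R where R: "X * Y = ?L * R" using assms(3) by (auto elim: dvdE)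
  hence "msubst X w * msubst Y w = mvar k * msubst R w" by (metis msubst_mult wL)
  hence "mvar k dvd msubst X w \<or> mvar k dvd msubst Y w" by (metis dvdI mvar_prime)
  moreover have "?L dvd F" if dv: "mvar k dvd msubst F w" for F
  proof -
    obtain S where "msubst F w = mvar k * S" using dv by (auto elim: dvdE)
    hence "F = msubst (mvar k * S) w'" using inv by metis
    also have "\<dots> = ?L * msubst S w'" by (simp add: msubst_mult w'_def)
    finally show ?thesis by (metis dvdI)
  qed
  ultimately show ?thesis by blast
qed


definition TT :: "nat \<Rightarrow> (nat \<times> nat \<times> nat) set" where
  "TT n = {(i,j,k). i < j \<and> j < n \<and> k < n \<and> k \<noteq> i \<and> k \<noteq> j}"

lemma finite_TT: "finite (TT n)"
  by (rule finite_subset[of _ "{..<n} \<times> {..<n} \<times> {..<n}"]) (auto simp: TT_def)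

lemma D2_roots_eq: "D2_roots n = (\<Prod>t\<in>TT n. Lf t)"
  unfolding D2_roots_def TT_def Lf_def by (rule refl)

definition act :: "(nat \<Rightarrow> nat) \<Rightarrow> nat \<times> nat \<times> nat \<Rightarrow> nat \<times> nat \<times> nat" where
  "act \<sigma> t = (case t of (i, j, k) \<Rightarrow> (min (\<sigma> i) (\<sigma> j), max (\<sigma> i) (\<sigma> j), \<sigma> k))"

lemma perm_numeral[simp]: "perm \<sigma> (numeral c) = numeral c" by (simp add: perm_def)
lemma perm_diff: "perm \<sigma> (p - q) = perm \<sigma> p - perm \<sigma> q" by (simp add: perm_def msubst_diff)

lemma perm_Lf: "perm \<sigma> (Lf t) = Lf (act \<sigma> t)"
proof -
  obtain i j k where t: "t = (i,j,k)" by (cases t)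
  have "perm \<sigma> (Lf t) = 2 * mvar (\<sigma> k) - mvar (\<sigma> i) - mvar (\<sigma> j)"
    by (simp add: t Lf_def perm_diff perm_mult)
  also have "\<dots> = Lf (act \<sigma> t)"
    by (cases "\<sigma> i \<le> \<sigma> j") (simp_all add: t Lf_def act_def min_def max_def)
  finally show ?thesis .
qed

lemma fixrange_lt: "bij \<sigma> \<Longrightarrow> \<forall>i\<ge>n. \<sigma> i = i \<Longrightarrow> x < n \<Longrightarrow> \<sigma> x < (n::nat)"
proof -
  assume a: "bij \<sigma>" "\<forall>i\<ge>n. \<sigma> i = i" "x < n"
  hence "\<sigma> x \<in> \<sigma> ` {0..<n}" by simp
  thus ?thesis using bij_fix_range[OF a(1,2)] by simp
qed

lemma act_TT:
  assumes "bij \<sigma>" "\<forall>i\<ge>n. \<sigma> i = i" "t \<in> TT n"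
  shows "act \<sigma> t \<in> TT n"
proof -
  obtain i j k where t: "t = (i,j,k)" by (cases t)
  have inj: "inj \<sigma>" using assms(1) bij_is_inj by blast
  have "\<sigma> i \<noteq> \<sigma> j" "\<sigma> k \<noteq> \<sigma> i" "\<sigma> k \<noteq> \<sigma> j" using assms(3) t inj by (auto simp: TT_def inj_eq)
  moreover have "\<sigma> i < n" "\<sigma> j < n" "\<sigma> k < n" using assms t fixrange_lt[OF assms(1,2)] by (auto simp: TT_def)
  ultimately show ?thesis using t by (auto simp: act_def TT_def min_def max_def)
qed

lemma inv_fix: "bij \<sigma> \<Longrightarrow> \<forall>i\<ge>n. \<sigma> i = i \<Longrightarrow> bij (inv \<sigma>) \<and> (\<forall>i\<ge>n. inv \<sigma> i = (i::nat))"
  by (metis bij_imp_bij_inv bij_is_inj inv_f_eq)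

lemma act_inv: 
  assumes "bij \<sigma>" "t \<in> TT n"
  shows "act (inv \<sigma>) (act \<sigma> t) = t"
proof -
  obtain i j k where t: "t = (i,j,k)" by (cases t)
  have inj: "inj \<sigma>" using assms(1) bij_is_inj by blast
  have "\<sigma> i \<noteq> \<sigma> j" using assms(2) t inj by (auto simp: TT_def inj_eq)
  thus ?thesis using t assms(2) inj by (auto simp: act_def min_def max_def TT_def)
qed

lemma act_bij:
  assumes "bij \<sigma>" "\<forall>i\<ge>n. \<sigma> i = i"
  shows "bij_betw (act \<sigma>) (TT n) (TT n)"
proof (rule bij_betw_byWitness[where f' = "act (inv \<sigma>)"])
  have iv: "bij (inv \<sigma>)" "\<forall>i\<ge>n. inv \<sigma> i = i" using inv_fix[OF assms] by auto
  show "\<forall>a\<in>TT n. act (inv \<sigma>) (act \<sigma> a) = a" using act_inv[OF assms(1)] by blast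
  show "\<forall>a'\<in>TT n. act \<sigma> (act (inv \<sigma>) a') = a'"
    using act_inv[OF iv(1)] assms(1) by (metis inv_inv_eq)
  show "act \<sigma> ` TT n \<subseteq> TT n" using act_TT[OF assms] by blast
  show "act (inv \<sigma>) ` TT n \<subseteq> TT n" using act_TT[OF iv] by blast
qed

lemma DR_symm: "symm n (D2_roots n)"
  unfolding symm_def D2_roots_eq
proof (intro allI impI)
  fix \<sigma> :: "nat \<Rightarrow> nat" assume a: "bij \<sigma> \<and> (\<forall>i\<ge>n. \<sigma> i = i)"
  have "perm \<sigma> (\<Prod>t\<in>TT n. Lf t) = (\<Prod>t\<in>TT n. Lf (act \<sigma> t))" by (simp add: perm_prod perm_Lf)
  also have "\<dots> = (\<Prod>t\<in>TT n. Lf t)" using prod.reindex_bij_betw[OF act_bij[of \<sigma> n], of Lf] a by simp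
  finally show "perm \<sigma> (\<Prod>t\<in>TT n. Lf t) = (\<Prod>t\<in>TT n. Lf t)" .
qed

lemma swp_other: "x \<noteq> a \<Longrightarrow> x \<noteq> b \<Longrightarrow> swp a b x = x" by (simp add: swp_def)
lemma swp_a[simp]: "swp a b a = b" by (simp add: swp_def)

lemma act_trans:
  assumes "t \<in> TT n" "s \<in> TT n"
  shows "\<exists>\<sigma>. bij \<sigma> \<and> (\<forall>i\<ge>n. \<sigma> i = i) \<and> act \<sigma> t = s"
proof -
  obtain i j k where t: "t = (i,j,k)" by (cases t)
  obtain i' j' k' where s: "s = (i',j',k')" by (cases s)
  have T: "i < j" "j < n" "k < n" "k \<noteq> i" "k \<noteq> j" using assms(1) t by (auto simp: TT_def)
  have S: "i' < j'" "j' < n" "k' < n" "k' \<noteq> i'" "k' \<noteq> j'" using assms(2) s by (auto simp: TT_def)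
  define s1 where "s1 = swp k k'"
  define i1 where "i1 = s1 i"
  define j1 where "j1 = s1 j"
  define s2 where "s2 = swp i1 i'"
  define j2 where "j2 = s2 j1"
  define s3 where "s3 = swp j2 j'"
  define \<sigma> where "\<sigma> = s3 \<circ> s2 \<circ> s1"
  have inj1: "inj s1" by (simp add: s1_def inj_swp)
  have inj2: "inj s2" by (simp add: s2_def inj_swp)
  have "s1 k = k'" by (simp add: s1_def)
  hence i1k: "i1 \<noteq> k'" "j1 \<noteq> k'" "i1 \<noteq> j1" using T inj1 by (auto simp: i1_def j1_def inj_eq)
  have lt1: "i1 < n" "j1 < n" using T S by (auto simp: i1_def j1_def s1_def swp_def)
  have s2k: "s2 k' = k'" using i1k S by (simp add: s2_def swp_other)
  have j2: "j2 \<noteq> k'" "j2 \<noteq> i'" "j2 < n"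
  proof -
    have "s2 j1 \<noteq> s2 k'" "s2 j1 \<noteq> s2 i1" using i1k inj2 by (auto simp: inj_eq)
    thus "j2 \<noteq> k'" "j2 \<noteq> i'" using s2k by (auto simp: j2_def s2_def)
    show "j2 < n" using lt1 S by (auto simp: j2_def s2_def swp_def)
  qed
  have "\<sigma> k = k'" using s2k j2 S by (simp add: \<sigma>_def s1_def s3_def swp_other)
  moreover have "\<sigma> i = i'" using j2 S by (simp add: \<sigma>_def i1_def[symmetric] s2_def s3_def swp_other)
  moreover have "\<sigma> j = j'" by (simp add: \<sigma>_def j1_def[symmetric] j2_def[symmetric] s3_def)
  moreover have "bij \<sigma>" by (simp add: \<sigma>_def s1_def s2_def s3_def bij_swp bij_comp)
  moreover have "\<forall>x\<ge>n. \<sigma> x = x"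
  proof (intro allI impI)
    fix x assume "x \<ge> n"
    hence "x \<noteq> k" "x \<noteq> k'" "x \<noteq> i1" "x \<noteq> i'" "x \<noteq> j2" "x \<noteq> j'" using T S lt1 j2 by auto
    thus "\<sigma> x = x" by (simp add: \<sigma>_def s1_def s2_def s3_def swp_other)
  qed
  ultimately show ?thesis using t s S by (intro exI[of _ \<sigma>]) (auto simp: act_def)
qed




lemma lookup_mvar: "lk (mvar a :: 'a::comm_ring_1 mpoly) u = (if u = sg a 1 then 1 else 0)"
  by (simp add: mvar_def lookup_single when_def eq_commute)

lemma two_eq: "(2::rat mpoly) = mconst 2" by (simp add: mconst_def)

lemma lookup_Lf: "lk (Lf (i,j,k)) u = 2 * (if u = sg k 1 then 1 else 0) - (if u = sg i 1 then 1 else 0) - (if u = sg j 1 then 1 else 0)"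
  by (simp add: Lf_def lookup_minus two_eq lookup_mconst_mult lookup_mvar)

lemma sg1_inj: "(sg a (1::nat) = sg b 1) = (a = b)"
proof
  assume "sg a (1::nat) = sg b 1"
  hence "lk (sg a (1::nat)) a = lk (sg b 1) a" by simp
  thus "a = b" by (simp add: lookup_single when_def split: if_splits)
qed simp

lemma lookup_Lf_sg:
  assumes "(i,j,k) \<in> TT n"
  shows "lk (Lf (i,j,k)) (sg z 1) = (if z = k then 2 else if z = i \<or> z = j then -1 else 0)"
proof -
  have d: "i \<noteq> j" "k \<noteq> i" "k \<noteq> j" using assms by (auto simp: TT_def)
  show ?thesis unfolding lookup_Lf sg1_inj
    using d by (cases "z = k"; cases "z = i"; cases "z = j") simp_all
qed

lemma keys_Lf: "ks (Lf (i,j,k)) \<subseteq> {sg i 1, sg j 1, sg k 1}"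
proof
  fix u assume u: "u \<in> ks (Lf (i,j,k))"
  show "u \<in> {sg i 1, sg j 1, sg k 1}"
  proof (rule ccontr)
    assume "u \<notin> {sg i 1, sg j 1, sg k 1}"
    hence "lk (Lf (i,j,k)) u = 0" unfolding lookup_Lf by simp
    thus False using u by (simp add: in_keys_iff)
  qed
qed

lemma Lf_nz: "t \<in> TT n \<Longrightarrow> Lf t \<noteq> 0"
proof
  assume t: "t \<in> TT n" and z: "Lf t = 0"
  obtain i j k where tt: "t = (i,j,k)" by (cases t)
  have "lk (Lf t) (sg k 1) = 2" using lookup_Lf_sg[of i j k n k] t tt by simp
  thus False using z by simp
qed

lemma lead_Lf_nz: "t \<in> TT n \<Longrightarrow> lead (Lf t) \<noteq> 0"
proof
  assume t: "t \<in> TT n" and l: "lead (Lf t) = 0"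
  obtain i j k where tt: "t = (i,j,k)" by (cases t)
  have "Lf t = mconst (lk (Lf t) 0)" by (rule lead0_const[OF l])
  moreover have "sg k (1::nat) \<noteq> 0" by (metis lookup_single_eq lookup_zero one_neq_zero)
  ultimately have "lk (Lf t) (sg k 1) = 0" by (metis lookup_single_not_eq mconst_def)
  thus False using lookup_Lf_sg[of i j k n k] t tt by simp
qed

lemma lead_Lf_form: "t \<in> TT n \<Longrightarrow> \<exists>x. lead (Lf t) = sg x 1"
  using lead_in_keys[OF Lf_nz] keys_Lf by (cases t) blast

lemma Lf_nonassoc:
  assumes t: "t \<in> TT n" and s: "s \<in> TT n" and d: "Lf t dvd Lf s"
  shows "t = s"
proof -
  obtain C where C: "Lf s = Lf t * C" using d by (auto elim: dvdE)
  have Cnz: "C \<noteq> 0" using C Lf_nz[OF s] by auto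
  obtain x where x: "lead (Lf t) = sg x 1" using lead_Lf_form[OF t] by blast
  obtain y where y: "lead (Lf s) = sg y 1" using lead_Lf_form[OF s] by blast
  have e: "sg y 1 = sg x 1 + lead C" using lead_mult(1)[OF Lf_nz[OF t] Cnz] C x y by simp
  have "lead C = 0"
  proof (rule poly_mapping_eqI)
    fix z
    have "lk (sg y 1) z = lk (sg x 1) z + lk (lead C) z" using e by (simp add: lookup_add)
    moreover have "lk (sg y 1) x = lk (sg x 1) x + lk (lead C) x" using e by (simp add: lookup_add)
    ultimately show "lk (lead C) z = lk 0 z"
      by (cases "z = x"; cases "y = x") (auto simp: lookup_single when_def)
  qed
  hence Cc: "C = mconst (lk C 0)" by (rule lead0_const)
  define c where "c = lk C 0"
  have cnz: "c \<noteq> 0" using Cnz Cc c_def by (metis mconst_0)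
  have pt: "lk (Lf s) u = c * lk (Lf t) u" for u
    using C Cc by (metis c_def lookup_mconst_mult mult.commute)
  obtain i j k where tt: "t = (i,j,k)" by (cases t)
  obtain i' j' k' where ss: "s = (i',j',k')" by (cases s)
  have T: "i < j" "k \<noteq> i" "k \<noteq> j" using t tt by (auto simp: TT_def)
  have S: "i' < j'" "k' \<noteq> i'" "k' \<noteq> j'" using s ss by (auto simp: TT_def)
  have fs: "\<And>z. lk (Lf s) (sg z 1) = (if z = k' then 2 else if z = i' \<or> z = j' then -1 else 0)"
    using lookup_Lf_sg s ss by blast
  have ft: "\<And>z. lk (Lf t) (sg z 1) = (if z = k then 2 else if z = i \<or> z = j then -1 else 0)"
    using lookup_Lf_sg t tt by blast
  have vk: "lk (Lf s) (sg k 1) = 2 * c" using pt[of "sg k 1"] ft[of k] by simp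
  have vi: "lk (Lf s) (sg i 1) = - c" using pt[of "sg i 1"] ft[of i] T by simp
  have vj: "lk (Lf s) (sg j 1) = - c" using pt[of "sg j 1"] ft[of j] T by simp
  have c1: "c = 1"
  proof -
    have "2 * c = 2 \<or> 2 * c = -1" using vk fs[of k] cnz by (auto split: if_splits)
    moreover have "- c = 2 \<or> - c = -1" using vi fs[of i] cnz by (auto split: if_splits)
    ultimately show ?thesis by auto
  qed
  have "k = k'" using vk fs[of k] c1 by (auto split: if_splits)
  moreover have "i = i' \<or> i = j'" using vi fs[of i] c1 by (auto split: if_splits)
  moreover have "j = i' \<or> j = j'" using vj fs[of j] c1 by (auto split: if_splits)
  ultimately show ?thesis using tt ss T S by auto
qed

lemma keys_DR: "ks (D2_roots n) \<subseteq> Bnd n (card (TT n))"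
proof -
  have "ks (Lf t) \<subseteq> Bnd n 1" if "t \<in> TT n" for t
  proof -
    obtain i j k where tt: "t = (i,j,k)" by (cases t)
    have "i < n" "j < n" "k < n" using that tt by (auto simp: TT_def)
    hence "{sg i 1, sg j 1, sg k 1} \<subseteq> Bnd n (1::nat)"
      by (auto simp: Bnd_def lookup_single when_def)
    thus ?thesis using keys_Lf tt by blast
  qed
  hence "ks (\<Prod>t\<in>TT n. Lf t) \<subseteq> Bnd n (\<Sum>t\<in>TT n. 1)" by (rule keys_prod_Bnd)
  thus ?thesis by (simp add: D2_roots_eq)
qed

lemma DR_nz: "D2_roots n \<noteq> 0"
  unfolding D2_roots_eq using Lf_nz finite_TT by (auto simp: prod_zero_iff)


lemma keys_perm_sub: "ks (perm \<sigma> p) \<subseteq> ren \<sigma> ` ks p"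
proof -
  have "ks (perm \<sigma> p) \<subseteq> (\<Union>m\<in>ks p. ks (sg (ren \<sigma> m) (lk p m)))"
    unfolding perm_expand by (rule keys_sum)
  thus ?thesis by (auto split: if_splits)
qed

lemma lead_pos0: "m \<in> ks q \<Longrightarrow> lk m 0 > 0 \<Longrightarrow> lk (lead q) 0 > 0"
proof (rule ccontr)
  assume m: "m \<in> ks q" "lk m 0 > 0" "\<not> lk (lead q) 0 > 0"
  hence "lead q < m" unfolding less_poly_mapping.rep_eq less_fun_def by (intro exI[of _ 0]) auto
  thus False using le_lead[OF m(1)] by simp
qed

lemma vars_factor:
  fixes a b :: "rat mpoly"
  assumes P: "\<forall>m\<in>ks (a*b). ks m \<subseteq> {0..<n}" and nz: "a \<noteq> 0" "b \<noteq> 0" and n: "n > 0"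
  shows "\<forall>m\<in>ks b. ks m \<subseteq> {0..<n}"
proof (rule ccontr)
  assume "\<not> (\<forall>m\<in>ks b. ks m \<subseteq> {0..<n})"
  then obtain m where m0: "m \<in> ks b" "\<not> ks m \<subseteq> {0..<n}" by blast
  then obtain N where N: "N \<in> ks m" "N \<notin> {0..<n}" by blast
  have m: "m \<in> ks b" "N \<in> ks m" "N \<ge> n" using m0 N by auto
  define \<sigma> where "\<sigma> = swp 0 N"
  have N0: "N \<noteq> 0" using m n by auto
  have "ren \<sigma> m \<in> ks (perm \<sigma> b)" using keys_perm_ren[OF inj_swp m(1)] \<sigma>_def by simp
  moreover have "lk (ren \<sigma> m) 0 > 0" using m(2) by (simp add: \<sigma>_def lookup_ren_swp swp_def in_keys_iff)
  ultimately have pb: "lk (lead (perm \<sigma> b)) 0 > 0" by (rule lead_pos0)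
  hence pbnz: "perm \<sigma> b \<noteq> 0" by (auto simp: lead_def)
  have panz: "perm \<sigma> a \<noteq> 0"
  proof -
    obtain m' where "m' \<in> ks a" using nz(1) by (metis ex_in_conv keys_eq_empty)
    hence "ren \<sigma> m' \<in> ks (perm \<sigma> a)" using keys_perm_ren[OF inj_swp] \<sigma>_def by simp
    thus ?thesis by auto
  qed
  have "lead (perm \<sigma> (a*b)) = lead (perm \<sigma> a) + lead (perm \<sigma> b)"
    by (simp add: perm_mult lead_mult(1)[OF panz pbnz])
  hence pos: "lk (lead (perm \<sigma> (a*b))) 0 > 0" using pb by (simp add: lookup_add)
  hence "perm \<sigma> (a*b) \<noteq> 0" by (auto simp: lead_def)
  hence "lead (perm \<sigma> (a*b)) \<in> ren \<sigma> ` ks (a*b)" using lead_in_keys keys_perm_sub by blast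
  then obtain m' where m': "m' \<in> ks (a*b)" "lead (perm \<sigma> (a*b)) = ren \<sigma> m'" by auto
  have "ks m' \<subseteq> {0..<n}" using P m'(1) by blast
  hence "N \<notin> ks m'" using m(3) by auto
  hence "lk (ren \<sigma> m') 0 = 0" by (simp add: \<sigma>_def lookup_ren_swp swp_def in_keys_iff)
  thus False using pos m' by simp
qed

lemma mvars_iff: "mvars P \<subseteq> A \<longleftrightarrow> (\<forall>m\<in>ks P. ks m \<subseteq> A)"
  by (auto simp: mvars_def)

lemma Phi_inj:
  assumes "\<forall>m\<in>ks P. ks m \<subseteq> {0..<n}" "\<forall>m\<in>ks Q. ks m \<subseteq> {0..<n}"
     "msubst P (vieta n) = msubst Q (vieta n)"
  shows "P = Q"
proof (rule ccontr)
  assume "P \<noteq> Q"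
  hence "P - Q \<noteq> 0" by simp
  moreover have "\<forall>m\<in>ks (P - Q). ks m \<subseteq> {0..<n}" using assms(1,2) keys_diff[of P Q] by blast
  ultimately have "msubst (P - Q) (vieta n) \<noteq> 0" by (rule Phi_nz)
  thus False using assms(3) by (simp add: msubst_diff)
qed

lemma D2_char: "mvars (D2 n) \<subseteq> {0..<n} \<and> msubst (D2 n) (vieta n) = D2_roots n"
proof -
  have "\<exists>!P. mvars P \<subseteq> {0..<n} \<and> msubst P (vieta n) = D2_roots n"
  proof (rule ex_ex1I)
    show "\<exists>P. mvars P \<subseteq> {0..<n} \<and> msubst P (vieta n) = D2_roots n"
      using FT[OF DR_symm keys_DR] by (simp add: mvars_iff)
  next
    fix P Q assume "mvars P \<subseteq> {0..<n} \<and> msubst P (vieta n) = D2_roots n"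
      "mvars Q \<subseteq> {0..<n} \<and> msubst Q (vieta n) = D2_roots n"
    thus "P = Q" using Phi_inj[of P n Q] by (simp add: mvars_iff)
  qed
  thus ?thesis unfolding D2_def by (rule theI')
qed


lemma Lf_not_unit: "t \<in> TT n \<Longrightarrow> \<not> Lf t dvd 1"
  using unit_const(1) lead_Lf_nz lead_const by metis

lemma Lf_prime: "t \<in> TT n \<Longrightarrow> Lf t dvd X * Y \<Longrightarrow> Lf t dvd X \<or> Lf t dvd Y"
proof -
  assume t: "t \<in> TT n" and d: "Lf t dvd X * Y"
  obtain i j k where tt: "t = (i,j,k)" by (cases t)
  have "i \<noteq> k" "j \<noteq> k" using t tt by (auto simp: TT_def)
  thus ?thesis using L_prime[of i k j X Y] d tt by simp
qed

lemma prime_dvd_prod: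
  assumes "finite S" "S \<subseteq> TT n" "t \<in> TT n" "Lf t dvd (\<Prod>s\<in>S. Lf s)"
  shows "t \<in> S"
  using assms
proof (induction S rule: finite_induct)
  case empty thus ?case using Lf_not_unit by auto
next
  case (insert x S)
  hence "Lf t dvd Lf x \<or> Lf t dvd (\<Prod>s\<in>S. Lf s)" using Lf_prime by simp
  thus ?case using insert Lf_nonassoc by blast
qed

lemma prod_dvd:
  assumes "finite S" "S \<subseteq> TT n" "\<forall>t\<in>S. Lf t dvd A"
  shows "(\<Prod>t\<in>S. Lf t) dvd A"
  using assms
proof (induction S rule: finite_induct)
  case empty thus ?case by simp
next
  case (insert x S)
  then obtain C where C: "A = (\<Prod>t\<in>S. Lf t) * C" by (auto elim: dvdE)
  have x: "x \<in> TT n" using insert by simp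
  have "Lf x dvd (\<Prod>t\<in>S. Lf t) * C" using insert C by simp
  moreover have "\<not> Lf x dvd (\<Prod>t\<in>S. Lf t)" using prime_dvd_prod[of S n x] insert by auto
  ultimately have "Lf x dvd C" using Lf_prime[OF x] by blast
  then obtain C' where "C = Lf x * C'" by (auto elim: dvdE)
  thus ?case using C insert by (simp add: mult_ac)
qed

lemma key:
  assumes AB: "A * B = D2_roots n" and sA: "symm n A" and t: "t \<in> TT n" "Lf t dvd A"
  shows "B dvd 1"
proof -
  have "\<forall>s\<in>TT n. Lf s dvd A"
  proof
    fix s assume s: "s \<in> TT n"
    obtain \<sigma> where \<sigma>: "bij \<sigma>" "\<forall>i\<ge>n. \<sigma> i = i" "act \<sigma> t = s" using act_trans[OF t(1) s] by blast
    obtain C where "A = Lf t * C" using t(2) by (auto elim: dvdE)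
    hence "perm \<sigma> A = Lf s * perm \<sigma> C" using \<sigma> by (simp add: perm_mult perm_Lf)
    moreover have "perm \<sigma> A = A" using sA \<sigma> by (simp add: symm_def)
    ultimately show "Lf s dvd A" by (metis dvdI)
  qed
  hence "D2_roots n dvd A" unfolding D2_roots_eq using finite_TT by (intro prod_dvd) auto
  then obtain C where C: "A = D2_roots n * C" by (auto elim: dvdE)
  hence "D2_roots n * (C * B) = D2_roots n * 1" using AB by (simp add: mult_ac)
  hence "C * B = 1" using DR_nz by simp
  thus ?thesis by (metis dvdI mult.commute)
qed

lemma monsum_zero: "finite I \<Longrightarrow> (\<Sum>i\<in>I. f i :: nat \<Rightarrow>\<^sub>0 nat) = 0 \<Longrightarrow> i \<in> I \<Longrightarrow> f i = 0"
proof (rule poly_mapping_eqI)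
  fix k assume "finite I" "(\<Sum>i\<in>I. f i) = 0" "i \<in> I"
  hence "(\<Sum>i\<in>I. lk (f i) k) = 0" by (metis lookup_sum lookup_zero)
  thus "lk (f i) k = lk 0 k" using \<open>finite I\<close> \<open>i \<in> I\<close> by simp
qed

lemma DR_not_const: "n \<ge> 3 \<Longrightarrow> lead (D2_roots n) \<noteq> 0"
proof
  assume n: "n \<ge> 3" and l: "lead (D2_roots n) = 0"
  have t0: "(0,1,2) \<in> TT n" using n by (auto simp: TT_def)
  have "lead (D2_roots n) = (\<Sum>t\<in>TT n. lead (Lf t))"
    unfolding D2_roots_eq using lead_prod[of "TT n" Lf] finite_TT Lf_nz by auto
  hence "lead (Lf (0,1,2)) = 0" using monsum_zero[OF finite_TT _ t0] l by metis
  thus False using lead_Lf_nz[OF t0] by simp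
qed

lemma unit_factor:
  assumes vb: "\<forall>m\<in>ks b. ks m \<subseteq> {0..<n}" and u: "msubst b (vieta n) dvd 1"
  shows "b dvd 1"
proof -
  define B where "B = msubst b (vieta n)"
  have B: "B = mconst (lk B 0)" "lk B 0 \<noteq> 0" using unit_const u B_def by auto
  have "msubst b (vieta n) = msubst (mconst (lk B 0)) (vieta n)" unfolding msubst_mconst using B B_def by simp
  moreover have "\<forall>m\<in>ks (mconst (lk B 0) :: rat mpoly). ks m \<subseteq> {0..<n}" by (simp add: mconst_def)
  ultimately have "b = mconst (lk B 0)" using Phi_inj vb by blast
  thus ?thesis using const_unit B(2) by simp
qed

theorem proposition2:
  fixes n :: nat
  assumes "n \<ge> 3"
  shows "irreducible (D2 n)"
proof -
  define P where "P = D2 n"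
  have vP: "\<forall>m\<in>ks P. ks m \<subseteq> {0..<n}" and PP: "msubst P (vieta n) = D2_roots n"
    using D2_char[of n] by (auto simp: P_def mvars_iff)
  have t0: "(0,1,2) \<in> TT n" using assms by (auto simp: TT_def)
  have Pnz: "P \<noteq> 0" using PP DR_nz by auto
  have Pnu: "\<not> P dvd 1"
  proof
    assume "P dvd 1"
    hence "P = mconst (lk P 0)" by (rule unit_const)
    hence "D2_roots n = mconst (lk P 0)" using PP by (metis msubst_mconst)
    thus False using DR_not_const[OF assms] by simp
  qed
  have fac: "a dvd 1 \<or> b dvd 1" if ab: "P = a * b" for a b
  proof -
    have nz: "a \<noteq> 0" "b \<noteq> 0" using ab Pnz by auto
    have vb: "\<forall>m\<in>ks b. ks m \<subseteq> {0..<n}" using vars_factor[of a b n] vP ab nz assms by simp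
    have va: "\<forall>m\<in>ks a. ks m \<subseteq> {0..<n}" using vars_factor[of b a n] vP ab nz assms by (simp add: mult.commute)
    define A where "A = msubst a (vieta n)"
    define B where "B = msubst b (vieta n)"
    have AB: "A * B = D2_roots n" using PP ab by (simp add: A_def B_def msubst_mult)
    have sA: "symm n A" and sB: "symm n B" by (simp_all add: A_def B_def vieta_symm)
    have "Lf (0,1,2) dvd A * B" using AB t0 unfolding D2_roots_eq
      by (metis dvd_prod_eqI finite_TT dvd_refl)
    hence "Lf (0,1,2) dvd A \<or> Lf (0,1,2) dvd B" using Lf_prime[OF t0] by blast
    thus ?thesis
    proof
      assume "Lf (0,1,2) dvd A"
      hence "B dvd 1" using key[OF AB sA t0] by blast
      thus ?thesis using unit_factor[OF vb] B_def by simp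
    next
      assume "Lf (0,1,2) dvd B"
      hence "A dvd 1" using key[of B A n, OF _ sB t0] AB by (simp add: mult.commute)
      thus ?thesis using unit_factor[OF va] A_def by simp
    qed
  qed
  show ?thesis unfolding P_def[symmetric] using Pnz Pnu fac by (auto intro: irreducibleI)
qed


end
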